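(* The Zorn vector matrix algebra $\mathfrak{Z}(\mathbb{Q})$ over $\mathbb{Q}$ does not have the hyperbolic property.
   Context: $\mathfrak{Z}(R)$ is the set of matrices $\begin{pmatrix}a&v\\ w&b\end{pmatrix}$ with $a,b\in R$, $v,w\in R^3$, with entrywise addition and product $\begin{pmatrix}a&v\\ w&b\end{pmatrix}\begin{pmatrix}a'&v'\\ w'&b'\end{pmatrix}=\begin{pmatrix}aa'+v\cdot w' & av'+b'v-w\times w'\\ a'w+bw'+v\times v' & bb'+w\cdot v'\end{pmatrix}$ (dot and cross products in $R^3$). A $\mathbb{Z}$-order of a finite-dimensional $\mathbb{Q}$-algebra is a unital subring finitely generated as a $\mathbb{Z}$-module spanning the algebra over $\mathbb{Q}$; its units form a loop. The algebra has the hyperbolic property if some $\mathbb{Z}$-order has a unit loop containing no subgroup isomorphic to $\mathbb{Z}^2$. *)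

theory Defs
  imports Complex_Main "HOL-Library.Product_Plus"
begin

text \<open>Vectors of Q^3 as triples; the Zorn vector matrix algebra Z(Q) as quadruples
  (a, v, w, b) standing for the matrix with rows (a, v) and (w, b).\<close>

type_synonym vec3 = "rat \<times> rat \<times> rat"
type_synonym zorn = "rat \<times> vec3 \<times> vec3 \<times> rat"

fun dot3 :: "vec3 \<Rightarrow> vec3 \<Rightarrow> rat" where
  "dot3 (v1, v2, v3) (w1, w2, w3) = v1 * w1 + v2 * w2 + v3 * w3"

fun cross3 :: "vec3 \<Rightarrow> vec3 \<Rightarrow> vec3" where
  "cross3 (v1, v2, v3) (w1, w2, w3) = (v2 * w3 - v3 * w2, v3 * w1 - v1 * w3, v1 * w2 - v2 * w1)"

fun sc3 :: "rat \<Rightarrow> vec3 \<Rightarrow> vec3" where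
  "sc3 c (v1, v2, v3) = (c * v1, c * v2, c * v3)"

text \<open>Addition on zorn is the componentwise one from Product_Plus.\<close>

fun zmult :: "zorn \<Rightarrow> zorn \<Rightarrow> zorn" where
  "zmult (a, v, w, b) (a', v', w', b') =
     (a * a' + dot3 v w',
      sc3 a v' + sc3 b' v - cross3 w w',
      sc3 a' w + sc3 b w' + cross3 v v',
      b * b' + dot3 w v')"

definition zone :: zorn where
  "zone = (1, (0, 0, 0), (0, 0, 0), 1)"

fun zscale :: "rat \<Rightarrow> zorn \<Rightarrow> zorn" where
  "zscale c (a, v, w, b) = (c * a, sc3 c v, sc3 c w, c * b)"

definition Z_order :: "zorn set \<Rightarrow> bool" where
  "Z_order R \<longleftrightarrow>
     zone \<in> R \<and>
     (\<forall>x\<in>R. \<forall>y\<in>R. x - y \<in> R \<and> zmult x y \<in> R) \<and>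
     (\<exists>S. finite S \<and> S \<subseteq> R \<and>
          R = {\<Sum>s\<in>S. zscale (of_int (k s)) s | k. True}) \<and>
     (\<forall>x. \<exists>S c. finite S \<and> S \<subseteq> R \<and> x = (\<Sum>s\<in>S. zscale (c s) s))"

definition zunits :: "zorn set \<Rightarrow> zorn set" where
  "zunits R = {x \<in> R. \<exists>y\<in>R. zmult x y = zone \<and> zmult y x = zone}"

text \<open>The unit loop of R contains a subgroup isomorphic to Z^2, i.e. there is an injective
  homomorphism from Z^2 into the unit loop (its image is such a subgroup).\<close>

definition contains_Z2 :: "zorn set \<Rightarrow> bool" where
  "contains_Z2 U \<longleftrightarrow>
     (\<exists>\<phi> :: int \<times> int \<Rightarrow> zorn. inj \<phi> \<and> range \<phi> \<subseteq> U \<and>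
        (\<forall>p q. \<phi> (p + q) = zmult (\<phi> p) (\<phi> q)))"

definition hyperbolic_property :: bool where
  "hyperbolic_property \<longleftrightarrow> (\<exists>R. Z_order R \<and> \<not> contains_Z2 (zunits R))"

end

theory Submission
  imports Defs
begin

lemma zscale_add: "zscale c (x + y) = zscale c x + zscale c y"
  by (cases x; cases y) (auto simp: algebra_simps)

lemma zscale_sum: "zscale c (\<Sum>s\<in>S. f s) = (\<Sum>s\<in>S. zscale c (f s))"
proof (induction S rule: infinite_finite_induct)
  case (infinite A) then show ?case by (simp add: zero_prod_def)
next
  case empty then show ?case by (simp add: zero_prod_def)
next
  case (insert x F) then show ?case by (simp add: zscale_add)
qed

lemma zscale_zscale: "zscale a (zscale b x) = zscale (a * b) x"
  by (cases x) (auto simp: algebra_simps)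

lemma zscale_Suc: "zscale (of_nat (Suc n)) x = zscale (of_nat n) x + x"
  by (cases x) (auto simp: algebra_simps)

lemma zscale_zero: "zscale 0 x = 0"
  by (cases x) (auto simp: zero_prod_def)

lemma zscale_neg: "zscale (- c) x = 0 - zscale c x"
  by (cases x) (auto simp: zero_prod_def)

context
  fixes R assumes R: "Z_order R"
begin

lemma R_one: "zone \<in> R" using R unfolding Z_order_def by blast

lemma R_diff: "x \<in> R \<Longrightarrow> y \<in> R \<Longrightarrow> x - y \<in> R"
  using R unfolding Z_order_def by blast

lemma R_zero: "0 \<in> R"
  using R_diff[OF R_one R_one] by simp

lemma R_add: "x \<in> R \<Longrightarrow> y \<in> R \<Longrightarrow> x + y \<in> R"
proof -
  assume "x \<in> R" "y \<in> R"
  then have "x - (0 - y) \<in> R" using R_diff R_zero by blast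
  then show ?thesis by simp
qed

lemma R_nat: "x \<in> R \<Longrightarrow> zscale (of_nat n) x \<in> R"
proof (induction n)
  case 0 then show ?case using zscale_zero[of x] R_zero by simp
next
  case (Suc n) then show ?case using R_add[of "zscale (of_nat n) x" x] by (simp only: zscale_Suc)
qed

lemma R_int: "x \<in> R \<Longrightarrow> zscale (of_int k) x \<in> R"
proof (cases "k \<ge> 0")
  case True
  assume "x \<in> R"
  then have "zscale (of_nat (nat k)) x \<in> R" by (rule R_nat)
  then show ?thesis using True by simp
next
  case False
  assume "x \<in> R"
  then have "zscale (of_nat (nat (-k))) x \<in> R" by (rule R_nat)
  then have "0 - zscale (of_nat (nat (-k))) x \<in> R" using R_diff R_zero by blast
  moreover have "zscale (of_int k) x = 0 - zscale (of_nat (nat (-k))) x"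
    using False zscale_neg[of "of_int (-k)" x] by simp
  ultimately show ?thesis by simp
qed

lemma R_sum: "finite S \<Longrightarrow> (\<And>s. s \<in> S \<Longrightarrow> f s \<in> R) \<Longrightarrow> (\<Sum>s\<in>S. f s) \<in> R"
  by (induction S rule: finite_induct) (auto simp: R_zero R_add)

lemma R_mult_in: "\<exists>D::int. D \<noteq> 0 \<and> zscale (of_int D) x \<in> R"
proof -
  obtain S c where S: "finite S" "S \<subseteq> R" "x = (\<Sum>s\<in>S. zscale (c s) s)"
    using R unfolding Z_order_def by blast
  define q where "q s = snd (quotient_of (c s))" for s
  define D where "D = (\<Prod>s\<in>S. q s)"
  have qpos: "q s > 0" for s unfolding q_def by (rule quotient_of_denom_pos')
  have Dpos: "D > 0" unfolding D_def using qpos by (simp add: prod_pos)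
  have "zscale (of_int D) x = (\<Sum>s\<in>S. zscale (of_int D * c s) s)"
    using S(3) by (simp add: zscale_sum zscale_zscale)
  also have "\<dots> \<in> R"
  proof (rule R_sum[OF S(1)])
    fix s assume s: "s \<in> S"
    obtain a b where ab: "quotient_of (c s) = (a, b)" by (cases "quotient_of (c s)")
    have cs: "c s = of_int a / of_int b" using quotient_of_div[OF ab] .
    have bq: "b = q s" unfolding q_def ab by simp
    have "b dvd D" unfolding D_def bq using s S(1) by (simp add: dvd_prodI)
    then obtain m where m: "D = b * m" by blast
    have "b > 0" using qpos bq by simp
    then have "of_int D * c s = of_int (a * m)" unfolding cs m by (simp add: field_simps)
    moreover have "zscale (of_int (a * m)) s \<in> R" using R_int s S(2) by blast
    ultimately show "zscale (of_int D * c s) s \<in> R" by simp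
  qed
  finally have "zscale (of_int D) x \<in> R" .
  then show ?thesis using Dpos by (intro exI[of _ D]) simp
qed

lemma R_contains_Z2: "contains_Z2 (zunits R)"
proof -
  obtain Dx where Dx: "Dx \<noteq> 0" "zscale (of_int Dx) (0, (1,0,0), (0,0,0), 0) \<in> R"
    using R_mult_in by blast
  obtain Dy where Dy: "Dy \<noteq> 0" "zscale (of_int Dy) (0, (0,0,0), (0,1,0), 0) \<in> R"
    using R_mult_in by blast
  define \<phi> where "\<phi> pq = (1::rat, (of_int (fst pq * Dx) :: rat, 0::rat, 0::rat), (0::rat, of_int (snd pq * Dy) :: rat, 0::rat), 1::rat)" for pq :: "int \<times> int"
  have inR: "\<phi> pq \<in> R" for pq
  proof -
    have "zone + zscale (of_int (fst pq)) (zscale (of_int Dx) (0, (1,0,0), (0,0,0), 0))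
      + zscale (of_int (snd pq)) (zscale (of_int Dy) (0, (0,0,0), (0,1,0), 0)) \<in> R"
      using R_add R_one R_int Dx Dy by blast
    moreover have "zone + zscale (of_int (fst pq)) (zscale (of_int Dx) (0, (1,0,0), (0,0,0), 0))
      + zscale (of_int (snd pq)) (zscale (of_int Dy) (0, (0,0,0), (0,1,0), 0)) = \<phi> pq"
      unfolding \<phi>_def zone_def by simp
    ultimately show ?thesis by simp
  qed
  have hom: "\<phi> (p + q) = zmult (\<phi> p) (\<phi> q)" for p q
    unfolding \<phi>_def by (cases p; cases q) (simp add: algebra_simps zero_prod_def)
  have zero: "\<phi> 0 = zone" unfolding \<phi>_def zone_def by (simp add: zero_prod_def)
  have units: "\<phi> p \<in> zunits R" for p
  proof -
    have "zmult (\<phi> p) (\<phi> (-p)) = zone" "zmult (\<phi> (-p)) (\<phi> p) = zone"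
      using hom[of p "-p", symmetric] hom[of "-p" p, symmetric] zero by auto
    then show ?thesis unfolding zunits_def using inR[of p] inR[of "-p"] by blast
  qed
  have inj: "inj \<phi>"
  proof (rule injI)
    fix p q assume "\<phi> p = \<phi> q"
    then have "fst p * Dx = fst q * Dx" "snd p * Dy = snd q * Dy"
      unfolding \<phi>_def by auto
    then show "p = q" using Dx(1) Dy(1) by (simp add: prod_eq_iff)
  qed
  show ?thesis unfolding contains_Z2_def using inj units hom by blast
qed

end

theorem proposition3p2:
  shows "\<not> hyperbolic_property"
  unfolding hyperbolic_property_def using R_contains_Z2 by blast

end
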